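(* Let $k\ge 1$, let $G=K_2\vee\overline{K_k}$, and let $v$ be a vertex of maximum degree in $G$. If $p\ge\max\{3,\Delta(G)\}$, then $G$ is $f_{p,v}$-edge-orientable.
   Context: $G_1\vee G_2$ denotes the join: the disjoint union of $G_1$ and $G_2$ plus all edges between them. $\overline{K_k}$ is the edgeless graph on $k$ vertices. An orientation of a graph $H$ is any digraph obtained by replacing each edge $uv$ with the arc $(u,v)$, with the arc $(v,u)$, or with both arcs. A kernel of a digraph $D$ is an independent set $S$ such that every vertex of $D-S$ has an out-neighbor in $S$. $D$ is kernel-perfect if every induced subdigraph of $D$ has a kernel. For $f:V(H)\to\mathbb{N}$, an orientation $D$ of $H$ is $f$-kernel-perfect if it is kernel-perfect and $f(v)\ge 1+d^+_D(v)$ for all $v$. For $f:E(G)\to\mathbb{N}$, $G$ is $f$-edge-orientable if its line graph $L(G)$ admits an $f$-kernel-perfect orientation. For $v\in V(G)$, define $f_{p,v}:E(G)\to\mathbb{N}$ by $f_{p,v}(e)=d_G(v)$ if $e$ is incident to $v$, and $f_{p,v}(e)=p$ otherwise. *)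

theory Defs
  imports Main
begin

text \<open>Simple graphs are given by a vertex set and a set of edges (2-element vertex sets).\<close>

definition degree :: "'a set set \<Rightarrow> 'a \<Rightarrow> nat" where
  "degree E v = card {e \<in> E. v \<in> e}"

definition max_degree :: "'a set \<Rightarrow> 'a set set \<Rightarrow> nat" where
  "max_degree V E = Max (degree E ` V)"

text \<open>An orientation of the undirected graph
  with vertex set V and symmetric adjacency adj: every arc joins adjacent vertices and every
  edge receives at least one of its two arcs (possibly both).\<close>

definition orientation :: "'b set \<Rightarrow> ('b \<Rightarrow> 'b \<Rightarrow> bool) \<Rightarrow> ('b \<times> 'b) set \<Rightarrow> bool" where
  "orientation V adj D \<longleftrightarrow>
     D \<subseteq> {(u, w). u \<in> V \<and> w \<in> V \<and> adj u w} \<and>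
     (\<forall>u\<in>V. \<forall>w\<in>V. adj u w \<longrightarrow> (u, w) \<in> D \<or> (w, u) \<in> D)"

definition is_kernel :: "('b \<times> 'b) set \<Rightarrow> 'b set \<Rightarrow> 'b set \<Rightarrow> bool" where
  "is_kernel D W S \<longleftrightarrow> S \<subseteq> W \<and> (\<forall>x\<in>S. \<forall>y\<in>S. (x, y) \<notin> D) \<and>
     (\<forall>x\<in>W - S. \<exists>y\<in>S. (x, y) \<in> D)"

definition kernel_perfect :: "'b set \<Rightarrow> ('b \<times> 'b) set \<Rightarrow> bool" where
  "kernel_perfect V D \<longleftrightarrow> (\<forall>W\<subseteq>V. \<exists>S. is_kernel D W S)"

definition outdeg :: "('b \<times> 'b) set \<Rightarrow> 'b \<Rightarrow> nat" where
  "outdeg D v = card {w. (v, w) \<in> D}"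

definition f_kernel_perfect_orientation ::
  "'b set \<Rightarrow> ('b \<Rightarrow> 'b \<Rightarrow> bool) \<Rightarrow> ('b \<Rightarrow> nat) \<Rightarrow> ('b \<times> 'b) set \<Rightarrow> bool" where
  "f_kernel_perfect_orientation V adj f D \<longleftrightarrow>
     orientation V adj D \<and> kernel_perfect V D \<and> (\<forall>v\<in>V. f v \<ge> 1 + outdeg D v)"

definition line_adj :: "'a set \<Rightarrow> 'a set \<Rightarrow> bool" where
  "line_adj e e' \<longleftrightarrow> e \<noteq> e' \<and> e \<inter> e' \<noteq> {}"

definition f_edge_orientable :: "'a set set \<Rightarrow> ('a set \<Rightarrow> nat) \<Rightarrow> bool" where
  "f_edge_orientable E f \<longleftrightarrow> (\<exists>D. f_kernel_perfect_orientation E line_adj f D)"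

definition f_pv :: "'a set set \<Rightarrow> nat \<Rightarrow> 'a \<Rightarrow> 'a set \<Rightarrow> nat" where
  "f_pv E p v e = (if v \<in> e then degree E v else p)"

text \<open>The join K_2 \<or> complement(K_k): vertices 0,1 form the K_2, vertices 2..k+1 the
  independent set.\<close>
definition joinV :: "nat \<Rightarrow> nat set" where
  "joinV k = {0..k+1}"

definition joinE :: "nat \<Rightarrow> nat set set" where
  "joinE k = {{0, 1}} \<union> {{i, j} | i j. i \<in> {0, 1} \<and> j \<in> {2..k+1}}"

end

theory Submission
  imports Defs
begin

lemma E_char: "x \<in> joinE k \<longleftrightarrow> x = {0,1} \<or> (\<exists>j. 2 \<le> j \<and> j \<le> k+1 \<and> (x = {0,j} \<or> x = {1,j}))"
  unfolding joinE_def by auto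

lemma E0: "2 \<le> j \<Longrightarrow> j \<le> k+1 \<Longrightarrow> {0,j} \<in> joinE k"
  unfolding E_char by blast
lemma E1: "2 \<le> j \<Longrightarrow> j \<le> k+1 \<Longrightarrow> {1,j} \<in> joinE k"
  unfolding E_char by blast

definition Dk :: "nat \<Rightarrow> (nat set \<times> nat set) set" where
"Dk k = {(x, {0,1}) | x. x \<in> joinE k \<and> x \<noteq> {0,1}}
  \<union> {({0,i},{0,j}) | i j. 2 \<le> j \<and> j < i \<and> i \<le> k+1}
  \<union> {({1,i},{1,j}) | i j. 2 \<le> i \<and> i < j \<and> j \<le> k+1}
  \<union> {({1,j},{0,j}) | j. 3 \<le> j \<and> j \<le> k+1}
  \<union> {({0,2},{1,2})}"

lemma D00: "2 \<le> i \<Longrightarrow> 2 \<le> j \<Longrightarrow> ({0,i},{0,j}) \<in> Dk k \<longleftrightarrow> j < i \<and> i \<le> k+1"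
  unfolding Dk_def by (auto simp: doubleton_eq_iff)
lemma D11: "2 \<le> i \<Longrightarrow> 2 \<le> j \<Longrightarrow> ({1,i},{1,j}) \<in> Dk k \<longleftrightarrow> i < j \<and> j \<le> k+1"
  unfolding Dk_def by (auto simp: doubleton_eq_iff)
lemma D01: "2 \<le> i \<Longrightarrow> 2 \<le> j \<Longrightarrow> ({0,i},{1,j}) \<in> Dk k \<longleftrightarrow> i = 2 \<and> j = 2"
  unfolding Dk_def by (auto simp: doubleton_eq_iff)
lemma D10: "2 \<le> i \<Longrightarrow> 2 \<le> j \<Longrightarrow> ({1,j},{0,i}) \<in> Dk k \<longleftrightarrow> i = j \<and> 3 \<le> j \<and> j \<le> k+1"
  unfolding Dk_def by (auto simp: doubleton_eq_iff)
lemma Dto: "(x,{0,1}) \<in> Dk k \<longleftrightarrow> x \<in> joinE k \<and> x \<noteq> {0,1}"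
  unfolding Dk_def by (auto simp: doubleton_eq_iff)
lemma Dfrom: "({0,1},y) \<notin> Dk k"
  unfolding Dk_def by (auto simp: doubleton_eq_iff)


lemma Dirr: "(x,x) \<notin> Dk k"
  unfolding Dk_def by (auto simp: doubleton_eq_iff)
lemmas D11' = D11[unfolded One_nat_def]
lemmas D01' = D01[unfolded One_nat_def]
lemmas D10' = D10[unfolded One_nat_def]
lemmas Dto' = Dto[unfolded One_nat_def]
lemmas Dfrom' = Dfrom[unfolded One_nat_def]
lemmas Dsimps = D00 D11 D01 D10 Dto Dfrom D11' D01' D10' Dto' Dfrom' Dirr


lemma kI: "S \<subseteq> W \<Longrightarrow> (\<forall>x\<in>S. \<forall>y\<in>S. (x, y) \<notin> D) \<Longrightarrow> (\<forall>x\<in>W - S. \<exists>y\<in>S. (x, y) \<in> D) \<Longrightarrow> is_kernel D W S"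
  unfolding is_kernel_def by blast

lemma kern_gen:
  assumes A: "\<forall>i\<in>WA. 2 \<le> i \<and> i \<le> k+1" and B: "\<forall>j\<in>WB. 2 \<le> j \<and> j \<le> k+1"
    and SA: "SA \<subseteq> WA" and SB: "SB \<subseteq> WB"
    and iAB: "\<forall>i\<in>SA. \<forall>j\<in>SB. i \<noteq> j"
    and iA: "\<forall>i\<in>SA. \<forall>i'\<in>SA. i = i'" and iB: "\<forall>j\<in>SB. \<forall>j'\<in>SB. j = j'"
    and aA: "\<forall>i\<in>WA-SA. (\<exists>i'\<in>SA. i' < i) \<or> (i = 2 \<and> 2 \<in> SB)"
    and aB: "\<forall>j\<in>WB-SB. (\<exists>j'\<in>SB. j < j') \<or> (3 \<le> j \<and> j \<in> SA)"
  shows "is_kernel (Dk k) ((\<lambda>i. {0,i}) ` WA \<union> (\<lambda>j. {1,j}) ` WB) ((\<lambda>i. {0,i}) ` SA \<union> (\<lambda>j. {1,j}) ` SB)"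
proof (rule kI)
  show "(\<lambda>i. {0::nat,i}) ` SA \<union> (\<lambda>j. {1,j}) ` SB \<subseteq> (\<lambda>i. {0,i}) ` WA \<union> (\<lambda>j. {1,j}) ` WB"
    using SA SB by blast
  show "\<forall>x\<in>(\<lambda>i. {0::nat,i}) ` SA \<union> (\<lambda>j. {1,j}) ` SB. \<forall>y\<in>(\<lambda>i. {0,i}) ` SA \<union> (\<lambda>j. {1,j}) ` SB. (x, y) \<notin> Dk k"
  proof (intro ballI)
    fix x y assume x: "x \<in> (\<lambda>i. {0::nat,i}) ` SA \<union> (\<lambda>j. {1,j}) ` SB"
      and y: "y \<in> (\<lambda>i. {0::nat,i}) ` SA \<union> (\<lambda>j. {1,j}) ` SB"
    from x show "(x, y) \<notin> Dk k"
    proof (elim UnE imageE)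
      fix i assume i: "i \<in> SA" "x = {0,i}"
      from y show ?thesis
      proof (elim UnE imageE)
        fix i' assume "i' \<in> SA" "y = {0,i'}" moreover have "i = i'" using i iA \<open>i' \<in> SA\<close> by blast
        ultimately show ?thesis using i by (simp add: Dirr)
      next
        fix j assume j: "j \<in> SB" "y = {1,j}"
        have "i \<noteq> j" using i j iAB by blast
        moreover have "2 \<le> i" "2 \<le> j" using i j A B SA SB by auto
        ultimately show ?thesis using i j by (simp add: Dsimps)
      qed
    next
      fix j assume j: "j \<in> SB" "x = {1,j}"
      from y show ?thesis
      proof (elim UnE imageE)
        fix i assume i: "i \<in> SA" "y = {0,i}"
        have "i \<noteq> j" using i j iAB by blast
        moreover have "2 \<le> i" "2 \<le> j" using i j A B SA SB by auto
        ultimately show ?thesis using i j by (simp add: Dsimps)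
      next
        fix j' assume "j' \<in> SB" "y = {1,j'}" moreover have "j = j'" using j iB \<open>j' \<in> SB\<close> by blast
        ultimately show ?thesis using j by (simp add: Dirr)
      qed
    qed
  qed
  show "\<forall>x\<in>(\<lambda>i. {0::nat,i}) ` WA \<union> (\<lambda>j. {1,j}) ` WB - ((\<lambda>i. {0,i}) ` SA \<union> (\<lambda>j. {1,j}) ` SB).
         \<exists>y\<in>(\<lambda>i. {0,i}) ` SA \<union> (\<lambda>j. {1,j}) ` SB. (x, y) \<in> Dk k"
  proof
    fix x assume x: "x \<in> (\<lambda>i. {0::nat,i}) ` WA \<union> (\<lambda>j. {1,j}) ` WB - ((\<lambda>i. {0,i}) ` SA \<union> (\<lambda>j. {1,j}) ` SB)"
    then have xn: "x \<notin> (\<lambda>i. {0::nat,i}) ` SA" "x \<notin> (\<lambda>j. {1::nat,j}) ` SB" by auto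
    from x have "x \<in> (\<lambda>i. {0::nat,i}) ` WA \<union> (\<lambda>j. {1,j}) ` WB" by blast
    then show "\<exists>y\<in>(\<lambda>i. {0,i}) ` SA \<union> (\<lambda>j. {1,j}) ` SB. (x, y) \<in> Dk k"
    proof (elim UnE imageE)
      fix i assume i: "i \<in> WA" "x = {0,i}"
      have "i \<notin> SA" using xn i by blast
      then consider i' where "i' \<in> SA" "i' < i" | "i = 2" "2 \<in> SB" using aA i by blast
      then show ?thesis
      proof cases
        case 1
        have "({0,i},{0,i'}) \<in> Dk k" using 1 i A SA by (subst D00) auto
        then show ?thesis using 1 i by blast
      next
        case 2
        have "({0,i},{1,2}) \<in> Dk k" using 2 by (subst D01) auto
        then show ?thesis using 2 i by blast
      qed
    next
      fix j assume j: "j \<in> WB" "x = {1,j}"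
      have "j \<notin> SB" using xn j by blast
      then consider j' where "j' \<in> SB" "j < j'" | "3 \<le> j" "j \<in> SA" using aB j by blast
      then show ?thesis
      proof cases
        case 1
        have "({1,j},{1,j'}) \<in> Dk k" using 1 j B SB by (subst D11) auto
        then show ?thesis using 1 j by blast
      next
        case 2
        have "({1,j},{0,j}) \<in> Dk k" using 2 j B by (subst D10) auto
        then show ?thesis using 2 j by blast
      qed
    qed
  qed
qed


lemma kern_AB:
  assumes A: "\<forall>i\<in>WA. 2 \<le> i \<and> i \<le> k+1" and B: "\<forall>j\<in>WB. 2 \<le> j \<and> j \<le> k+1"
  shows "\<exists>S. is_kernel (Dk k) ((\<lambda>i. {0,i}) ` WA \<union> (\<lambda>j. {1,j}) ` WB) S"
proof -
  have fA: "finite WA" by (rule finite_subset[of _ "{0..k+1}"]) (use A in auto)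
  have fB: "finite WB" by (rule finite_subset[of _ "{0..k+1}"]) (use B in auto)
  have G: "\<exists>S. is_kernel (Dk k) ((\<lambda>i. {0,i}) ` WA \<union> (\<lambda>j. {1,j}) ` WB) S"
    if "SA \<subseteq> WA" "SB \<subseteq> WB" "\<forall>i\<in>SA. \<forall>j\<in>SB. i \<noteq> j"
    "\<forall>i\<in>SA. \<forall>i'\<in>SA. i = i'" "\<forall>j\<in>SB. \<forall>j'\<in>SB. j = j'"
    "\<forall>i\<in>WA-SA. (\<exists>i'\<in>SA. i' < i) \<or> (i = 2 \<and> 2 \<in> SB)"
    "\<forall>j\<in>WB-SB. (\<exists>j'\<in>SB. j < j') \<or> (3 \<le> j \<and> j \<in> SA)" for SA SB
    using kern_gen[OF A B that] by blast
  show ?thesis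
  proof (cases "WA = {}")
    case True
    show ?thesis
    proof (cases "WB = {}")
      case True
      then show ?thesis using \<open>WA = {}\<close> by (intro G[of "{}" "{}"]) auto
    next
      case False
      define j0 where "j0 = Max WB"
      have j0: "j0 \<in> WB" "\<forall>j\<in>WB. j \<le> j0" using False fB j0_def by auto
      show ?thesis
        apply (rule G[of "{}" "{j0}"])
        using j0 \<open>WA = {}\<close> by (auto simp: le_less)
    qed
  next
    case False
    define i0 where "i0 = Min WA"
    have i0: "i0 \<in> WA" "\<forall>i\<in>WA. i0 \<le> i" using False fA i0_def by auto
    show ?thesis
    proof (cases "WB = {}")
      case True
      show ?thesis
        apply (rule G[of "{i0}" "{}"])
        using i0 \<open>WB = {}\<close> by (auto simp: le_less)
    next
      case False
      define j0 where "j0 = Max WB"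
      have j0: "j0 \<in> WB" "\<forall>j\<in>WB. j \<le> j0" using False fB j0_def by auto
      show ?thesis
      proof (cases "i0 = j0")
        case False
        show ?thesis
          apply (rule G[of "{i0}" "{j0}"])
          using i0 j0 False by (auto simp: le_less)
      next
        case True
        show ?thesis
        proof (cases "j0 = 2")
          case j2: True
          have WB: "WB = {2}" using j0 j2 B by fastforce
          show ?thesis
          proof (cases "WA - {2} = {}")
            case True
            show ?thesis
              apply (rule G[of "{}" "{2}"])
              using True WB by auto
          next
            case False
            define i1 where "i1 = Min (WA - {2})"
            have fA2: "finite (WA - {2})" using fA by blast
            have i1: "i1 \<in> WA - {2}" "\<forall>i\<in>WA - {2}. i1 \<le> i"
              using Min_in[OF fA2 False] Min_le[OF fA2] i1_def by auto
            show ?thesis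
              apply (rule G[of "{i1}" "{2}"])
              using i1 WB by (auto simp: le_less)
          qed
        next
          case j3: False
          have j03: "3 \<le> j0" using j3 j0 B by fastforce
          show ?thesis
          proof (cases "WB - {j0} = {}")
            case True
            show ?thesis
              apply (rule G[of "{j0}" "{}"])
              using True j0 j03 \<open>i0 = j0\<close> i0 by (auto simp: le_less)
          next
            case False
            define j1 where "j1 = Max (WB - {j0})"
            have fB2: "finite (WB - {j0})" using fB by blast
            have j1: "j1 \<in> WB - {j0}" "\<forall>j\<in>WB - {j0}. j \<le> j1"
              using Max_in[OF fB2 False] Max_ge[OF fB2] j1_def by auto
            have "j1 < j0" using j1 j0 by force
            show ?thesis
              apply (rule G[of "{j0}" "{j1}"])
              using j1 j0 j03 \<open>j1 < j0\<close> \<open>i0 = j0\<close> i0 by (auto simp: le_less)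
          qed
        qed
      qed
    qed
  qed
qed


lemma kp_Dk: "kernel_perfect (joinE k) (Dk k)"
  unfolding kernel_perfect_def
proof (intro allI impI)
  fix W assume W: "W \<subseteq> joinE k"
  show "\<exists>S. is_kernel (Dk k) W S"
  proof (cases "{0,1} \<in> W")
    case True
    show ?thesis
    proof (rule exI[of _ "{{0,1}}"], rule kI)
      show "{{0,1}} \<subseteq> W" using True by blast
      show "\<forall>x\<in>{{0::nat,1}}. \<forall>y\<in>{{0,1}}. (x, y) \<notin> Dk k" by (simp add: Dirr)
      show "\<forall>x\<in>W - {{0,1}}. \<exists>y\<in>{{0,1}}. (x, y) \<in> Dk k"
      proof
        fix x assume "x \<in> W - {{0,1}}"
        thus "\<exists>y\<in>{{0,1}}. (x, y) \<in> Dk k" using W Dto[of x k] by blast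
      qed
    qed
  next
    case False
    define WA where "WA = {i. {0,i} \<in> W \<and> 2 \<le> i \<and> i \<le> k+1}"
    define WB where "WB = {i. {1,i} \<in> W \<and> 2 \<le> i \<and> i \<le> k+1}"
    have "W = (\<lambda>i. {0,i}) ` WA \<union> (\<lambda>j. {1,j}) ` WB"
    proof
      show "W \<subseteq> (\<lambda>i. {0,i}) ` WA \<union> (\<lambda>j. {1,j}) ` WB"
      proof
        fix x assume x: "x \<in> W"
        then have "x \<in> joinE k" using W by blast
        then have "x = {0,1} \<or> (\<exists>j. 2 \<le> j \<and> j \<le> k+1 \<and> (x = {0,j} \<or> x = {1,j}))"
          by (simp add: E_char)
        then show "x \<in> (\<lambda>i. {0,i}) ` WA \<union> (\<lambda>j. {1,j}) ` WB"
          using x False unfolding WA_def WB_def by blast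
      qed
      show "(\<lambda>i. {0,i}) ` WA \<union> (\<lambda>j. {1,j}) ` WB \<subseteq> W"
        unfolding WA_def WB_def by blast
    qed
    moreover have "\<exists>S. is_kernel (Dk k) ((\<lambda>i. {0,i}) ` WA \<union> (\<lambda>j. {1,j}) ` WB) S"
      by (rule kern_AB) (auto simp: WA_def WB_def)
    ultimately show ?thesis by simp
  qed
qed

lemma orient_Dk: "k \<ge> 1 \<Longrightarrow> orientation (joinE k) line_adj (Dk k)"
  unfolding orientation_def
proof (intro conjI ballI impI)
  assume k: "k \<ge> 1"
  show "Dk k \<subseteq> {(u, w). u \<in> joinE k \<and> w \<in> joinE k \<and> line_adj u w}"
  proof
    fix z assume z: "z \<in> Dk k"
    have e0: "{0,1} \<in> joinE k" by (simp add: E_char)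
    have e02: "{0,2} \<in> joinE k" "{1,2} \<in> joinE k" using k E0[of 2 k] E1[of 2 k] by auto
    from z show "z \<in> {(u, w). u \<in> joinE k \<and> w \<in> joinE k \<and> line_adj u w}"
      unfolding Dk_def
    proof (elim UnE)
      assume "z \<in> {(x, {0,1}) | x. x \<in> joinE k \<and> x \<noteq> {0,1}}"
      then obtain x where x: "z = (x,{0,1})" "x \<in> joinE k" "x \<noteq> {0,1}" by blast
      then consider j where "x = {0,j}" | j where "x = {1,j}" by (auto simp: E_char)
      then have "line_adj x {0,1}" using x(3) unfolding line_adj_def by cases auto
      then show ?thesis using x e0 by simp
    next
      assume "z \<in> {({0,i},{0,j}) | i j. 2 \<le> j \<and> j < i \<and> i \<le> k+1}"
      then obtain i j where x: "z = ({0,i},{0,j})" "2 \<le> j" "j < i" "i \<le> k+1" by blast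
      then have "{0,i} \<in> joinE k" "{0,j} \<in> joinE k" using E0[of i k] E0[of j k] by auto
      moreover have "line_adj {0,i} {0::nat,j}" using x unfolding line_adj_def by (auto simp: doubleton_eq_iff)
      ultimately show ?thesis using x by simp
    next
      assume "z \<in> {({1,i},{1,j}) | i j. 2 \<le> i \<and> i < j \<and> j \<le> k+1}"
      then obtain i j where x: "z = ({1,i},{1,j})" "2 \<le> i" "i < j" "j \<le> k+1" by blast
      then have "{1,i} \<in> joinE k" "{1,j} \<in> joinE k" using E1[of i k] E1[of j k] by auto
      moreover have "line_adj {1,i} {1::nat,j}" using x unfolding line_adj_def by (auto simp: doubleton_eq_iff)
      ultimately show ?thesis using x by simp
    next
      assume "z \<in> {({1,j},{0,j}) | j. 3 \<le> j \<and> j \<le> k+1}"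
      then obtain j where x: "z = ({1,j},{0,j})" "3 \<le> j" "j \<le> k+1" by blast
      then have "{1,j} \<in> joinE k" "{0,j} \<in> joinE k" using E1[of j k] E0[of j k] by auto
      moreover have "line_adj {1,j} {0::nat,j}" using x unfolding line_adj_def by (auto simp: doubleton_eq_iff)
      ultimately show ?thesis using x by simp
    next
      assume "z \<in> {({0,2},{1,2})}"
      moreover have "line_adj {0,2} {1::nat,2}" unfolding line_adj_def by (auto simp: doubleton_eq_iff)
      ultimately show ?thesis using e02 by simp
    qed
  qed
  fix u w assume u: "u \<in> joinE k" and w: "w \<in> joinE k" and a: "line_adj u w"
  have uw: "u \<noteq> w" using a unfolding line_adj_def by blast
  have int: "u \<inter> w \<noteq> {}" using a unfolding line_adj_def by blast
  show "(u, w) \<in> Dk k \<or> (w, u) \<in> Dk k"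
  proof (cases "u = {0,1}")
    case True then show ?thesis using w uw Dto[of w k] by auto
  next
    case uF: False
    show ?thesis
    proof (cases "w = {0,1}")
      case True then show ?thesis using u uw Dto[of u k] by auto
    next
      case wF: False
      from u uF obtain i where i: "2 \<le> i" "i \<le> k+1" "u = {0,i} \<or> u = {1,i}"
        unfolding E_char by blast
      from w wF obtain j where j: "2 \<le> j" "j \<le> k+1" "w = {0,j} \<or> w = {1,j}"
        unfolding E_char by blast
      have ij: "i \<noteq> j \<or> j = i" by blast
      from i(3) show ?thesis
      proof
        assume ui: "u = {0,i}"
        from j(3) show ?thesis
        proof
          assume wj: "w = {0,j}"
          have "i \<noteq> j" using ui wj uw by blast
          then show ?thesis using ui wj i j \<open>i \<noteq> j\<close> by (auto simp: Dsimps)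
        next
          assume wj: "w = {1,j}"
          have "i = j" using ui wj int i j by auto
          then show ?thesis using ui wj i j \<open>i = j\<close> by (auto simp: Dsimps)
        qed
      next
        assume ui: "u = {1,i}"
        from j(3) show ?thesis
        proof
          assume wj: "w = {0,j}"
          have "i = j" using ui wj int i j by auto
          then show ?thesis using ui wj i j \<open>i = j\<close> by (auto simp: Dsimps)
        next
          assume wj: "w = {1,j}"
          have "i \<noteq> j" using ui wj uw by blast
          then show ?thesis using ui wj i j \<open>i \<noteq> j\<close> by (auto simp: Dsimps)
        qed
      qed
    qed
  qed
qed


lemma E_eq: "joinE k = {{0,1}} \<union> (\<lambda>j. {0,j}) ` {2..k+1} \<union> (\<lambda>j. {1,j}) ` {2..k+1}"
proof
  show "joinE k \<subseteq> {{0,1}} \<union> (\<lambda>j. {0,j}) ` {2..k+1} \<union> (\<lambda>j. {1,j}) ` {2..k+1}"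
  proof
    fix x assume "x \<in> joinE k"
    then consider "x = {0,1}" | j where "2 \<le> j" "j \<le> k+1" "x = {0,j}" | j where "2 \<le> j" "j \<le> k+1" "x = {1,j}"
      unfolding E_char by blast
    then show "x \<in> {{0,1}} \<union> (\<lambda>j. {0,j}) ` {2..k+1} \<union> (\<lambda>j. {1,j}) ` {2..k+1}"
      by cases auto
  qed
  show "{{0,1}} \<union> (\<lambda>j. {0,j}) ` {2..k+1} \<union> (\<lambda>j. {1,j}) ` {2..k+1} \<subseteq> joinE k"
    unfolding joinE_def by blast
qed
lemma finE: "finite (joinE k)"
  unfolding E_eq by simp

lemma out0: "2 \<le> j \<Longrightarrow> ({0,j},w) \<in> Dk k \<Longrightarrow> w = {0,1} \<or> (\<exists>i. 2 \<le> i \<and> i < j \<and> w = {0,i}) \<or> (j = 2 \<and> w = {1,2})"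
  unfolding Dk_def by (auto simp: doubleton_eq_iff)

lemma out1: "2 \<le> j \<Longrightarrow> ({1,j},w) \<in> Dk k \<Longrightarrow> w = {0,1} \<or> (\<exists>i. j < i \<and> i \<le> k+1 \<and> w = {1,i}) \<or> (3 \<le> j \<and> w = {0,j})"
  unfolding Dk_def by (auto simp: doubleton_eq_iff)

lemma A1: "{w. ({0,2}, w) \<in> Dk k} \<subseteq> {{0,1},{1,2}}"
proof
  fix w assume "w \<in> {w. ({0,2}, w) \<in> Dk k}"
  then have "w = {0,1} \<or> (\<exists>i. 2 \<le> i \<and> i < 2 \<and> w = {0,i}) \<or> w = {1,2}" using out0[of 2 w k] by simp
  then show "w \<in> {{0,1},{1,2}}" by auto
qed
lemma A2: assumes "3 \<le> j" shows "{w. ({0,j}, w) \<in> Dk k} \<subseteq> insert {0,1} ((\<lambda>i. {0,i}) ` {2..<j})"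
proof
  fix w assume "w \<in> {w. ({0,j}, w) \<in> Dk k}"
  then have "w = {0,1} \<or> (\<exists>i. 2 \<le> i \<and> i < j \<and> w = {0,i})" using out0[of j w k] assms by auto
  then show "w \<in> insert {0,1} ((\<lambda>i. {0,i}) ` {2..<j})" by auto
qed
lemma A3: "{w. ({1,2}, w) \<in> Dk k} \<subseteq> insert {0,1} ((\<lambda>i. {1,i}) ` {3..k+1})"
proof
  fix w assume "w \<in> {w. ({1,2}, w) \<in> Dk k}"
  then have "w = {0,1} \<or> (\<exists>i. 2 < i \<and> i \<le> k+1 \<and> w = {1,i})" using out1[of 2 w k] by auto
  then show "w \<in> insert {0,1} ((\<lambda>i. {1,i}) ` {3..k+1})" by auto
qed
lemma A4: assumes "3 \<le> j" shows "{w. ({1,j}, w) \<in> Dk k} \<subseteq> insert {0,1} (insert {0,j} ((\<lambda>i. {1,i}) ` {j<..k+1}))"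
proof
  fix w assume "w \<in> {w. ({1,j}, w) \<in> Dk k}"
  then have "w = {0,1} \<or> (\<exists>i. j < i \<and> i \<le> k+1 \<and> w = {1,i}) \<or> w = {0,j}" using out1[of j w k] assms by auto
  then show "w \<in> insert {0,1} (insert {0,j} ((\<lambda>i. {1,i}) ` {j<..k+1}))" by auto
qed

lemma outdeg_Dk:
  assumes k: "k \<ge> 2" and x: "x \<in> joinE k"
  shows "outdeg (Dk k) x \<le> k"
proof -
  from x consider "x = {0,1}" | j where "2 \<le> j" "j \<le> k+1" "x = {0,j}" | j where "2 \<le> j" "j \<le> k+1" "x = {1,j}"
    unfolding E_char by blast
  then show ?thesis
  proof cases
    case 1
    then have "{w. (x, w) \<in> Dk k} = {}" using Dfrom by blast
    then show ?thesis unfolding outdeg_def by simp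
  next
    case 2
    show ?thesis
    proof (cases "j = 2")
      case True
      have "{w. (x, w) \<in> Dk k} \<subseteq> {{0,1},{1,2}}" using A1 2 True by simp
      then have "outdeg (Dk k) x \<le> card {{0::nat,1},{1,2}}" unfolding outdeg_def
        by (rule card_mono[rotated]) simp
      also have "\<dots> \<le> 2" by (rule card_insert_le_m1) auto
      finally show ?thesis using k by simp
    next
      case False
      have "{w. (x, w) \<in> Dk k} \<subseteq> insert {0,1} ((\<lambda>i. {0,i}) ` {2..<j})" using A2[of j k] 2 False by simp
      then have "outdeg (Dk k) x \<le> card (insert {0::nat,1} ((\<lambda>i. {0,i}) ` {2..<j}))" unfolding outdeg_def
        by (rule card_mono[rotated]) simp
      also have "\<dots> \<le> Suc (card ((\<lambda>i. {0::nat,i}) ` {2..<j}))" by (rule card_insert_le_m1) auto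
      also have "\<dots> \<le> Suc (card {2..<j})" using card_image_le[of "{2..<j}" "\<lambda>i. {0::nat,i}"] by simp
      finally show ?thesis using 2 by simp
    qed
  next
    case 3
    show ?thesis
    proof (cases "j = 2")
      case True
      have "{w. (x, w) \<in> Dk k} \<subseteq> insert {0,1} ((\<lambda>i. {1,i}) ` {3..k+1})" using A3 3 True by simp
      then have "outdeg (Dk k) x \<le> card (insert {0::nat,1} ((\<lambda>i. {1,i}) ` {3..k+1}))" unfolding outdeg_def
        by (rule card_mono[rotated]) simp
      also have "\<dots> \<le> Suc (card ((\<lambda>i. {1::nat,i}) ` {3..k+1}))" by (rule card_insert_le_m1) auto
      also have "\<dots> \<le> Suc (card {3..k+1})" using card_image_le[of "{3..k+1}" "\<lambda>i. {1::nat,i}"] by simp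
      finally show ?thesis using k by simp
    next
      case False
      have "{w. (x, w) \<in> Dk k} \<subseteq> insert {0,1} (insert {0,j} ((\<lambda>i. {1,i}) ` {j<..k+1}))" using A4[of j k] 3 False by simp
      then have "outdeg (Dk k) x \<le> card (insert {0::nat,1} (insert {0,j} ((\<lambda>i. {1,i}) ` {j<..k+1})))" unfolding outdeg_def
        by (rule card_mono[rotated]) simp
      also have "\<dots> \<le> Suc (card (insert {0,j} ((\<lambda>i. {1::nat,i}) ` {j<..k+1})))" by (rule card_insert_le_m1) auto
      also have "\<dots> \<le> Suc (Suc (card ((\<lambda>i. {1::nat,i}) ` {j<..k+1})))" using card_insert_if[of "(\<lambda>i. {1::nat,i}) ` {j<..k+1}" "{0,j}"] by simp
      also have "\<dots> \<le> Suc (Suc (card {j<..k+1}))" using card_image_le[of "{j<..k+1}" "\<lambda>i. {1::nat,i}"] by simp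
      finally have "outdeg (Dk k) x \<le> Suc (Suc (card {j<..k+1}))" .
      moreover have "card {j<..k+1} = k+1-j" by simp
      ultimately show ?thesis using 3 False by linarith
    qed
  qed
qed

lemma L2: "inj_on (\<lambda>j. {0::nat,j}) {2..k+1}"
proof (rule inj_onI)
  fix x y assume "x \<in> {2..k+1}" "y \<in> {2..k+1}" "{0::nat,x} = {0,y}"
  then have "x \<in> {0,y}" by blast
  moreover have "x \<noteq> 0" using \<open>x \<in> {2..k+1}\<close> by simp
  ultimately show "x = y" by blast
qed
lemma L3: "{0,1} \<notin> (\<lambda>j. {0::nat,j}) ` {2..k+1}"
proof
  assume "{0,1} \<in> (\<lambda>j. {0::nat,j}) ` {2..k+1}"
  then obtain j where "j \<in> {2..k+1}" "{0::nat,1} = {0,j}" by blast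
  then have "(1::nat) \<in> {0,j}" by blast
  then show False using \<open>j \<in> {2..k+1}\<close> by simp
qed

lemma maxdeg: "max_degree (joinV k) (joinE k) \<ge> k+1"
proof -
  have e0: "{0,1} \<in> joinE k" unfolding joinE_def by blast
  have ej: "\<forall>j\<in>{2..k+1}. {0,j} \<in> joinE k" using E0 by auto
  have sub: "insert {0,1} ((\<lambda>j. {0::nat,j}) ` {2..k+1}) \<subseteq> {e \<in> joinE k. 0 \<in> e}"
    using e0 ej by blast
  have fin: "finite {e \<in> joinE k. 0 \<in> e}" by (rule finite_subset[OF _ finE]) blast
  have c1: "card (insert {0,1} ((\<lambda>j. {0::nat,j}) ` {2..k+1})) \<le> degree (joinE k) 0"
    unfolding degree_def using card_mono[OF fin sub] .
  have inj: "inj_on (\<lambda>j. {0::nat,j}) {2..k+1}" by (rule L2)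
  have nin: "{0,1} \<notin> (\<lambda>j. {0::nat,j}) ` {2..k+1}" by (rule L3)
  have c2: "card (insert {0,1} ((\<lambda>j. {0::nat,j}) ` {2..k+1})) = k+1"
    using card_image[OF inj] nin by simp
  have c3: "degree (joinE k) 0 \<le> max_degree (joinV k) (joinE k)"
    unfolding max_degree_def joinV_def by (rule Max_ge) simp_all
  show ?thesis using c1 c2 c3 by linarith
qed


lemma kernel_rank:
  fixes r :: "'b \<Rightarrow> nat"
  assumes fin: "finite W" and rk: "\<forall>x y. (x,y) \<in> D \<longrightarrow> r y < r x"
  shows "\<exists>S. is_kernel D W S"
  using fin
proof (induction "card W" arbitrary: W rule: less_induct)
  case less
  show ?case
  proof (cases "W = {}")
    case True then show ?thesis by (intro exI[of _ "{}"]) (simp add: is_kernel_def)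
  next
    case False
    define m where "m = Min (r ` W)"
    have "m \<in> r ` W" unfolding m_def using less.prems False by (intro Min_in) auto
    then obtain x where x: "x \<in> W" "r x = m" by blast
    have xmin: "\<forall>y\<in>W. r x \<le> r y" using x less.prems unfolding m_def by auto
    define W' where "W' = W - {x} - {y. (y,x) \<in> D}"
    have "W' \<subseteq> W" unfolding W'_def by blast
    have fW': "finite W'" using less.prems \<open>W' \<subseteq> W\<close> finite_subset by blast
    have "W' \<subset> W" using x unfolding W'_def by blast
    then have "card W' < card W" using less.prems by (intro psubset_card_mono)
    then obtain S' where S': "is_kernel D W' S'" using less.hyps fW' by blast
    have "is_kernel D W (insert x S')"
      unfolding is_kernel_def
    proof (intro conjI ballI)
      show "insert x S' \<subseteq> W" using S' x \<open>W' \<subseteq> W\<close> unfolding is_kernel_def by blast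
    next
      fix a b assume a: "a \<in> insert x S'" and b: "b \<in> insert x S'"
      show "(a, b) \<notin> D"
      proof
        assume ab: "(a, b) \<in> D"
        then have rab: "r b < r a" using rk by blast
        show False
        proof (cases "a = x")
          case True
          then have "b \<in> W" using b S' \<open>W' \<subseteq> W\<close> x unfolding is_kernel_def by blast
          then show False using xmin rab True by force
        next
          case aF: False
          then have aS: "a \<in> S'" using a by blast
          then have aW': "a \<in> W'" using S' unfolding is_kernel_def by blast
          show False
          proof (cases "b = x")
            case True then show False using aW' ab unfolding W'_def by blast
          next
            case False then have "b \<in> S'" using b by blast
            then show False using aS ab S' unfolding is_kernel_def by blast
          qed
        qed
      qed
    next
      fix z assume z: "z \<in> W - insert x S'"
      show "\<exists>y\<in>insert x S'. (z, y) \<in> D"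
      proof (cases "(z, x) \<in> D")
        case True then show ?thesis by blast
      next
        case False
        then have "z \<in> W' - S'" using z unfolding W'_def by blast
        then show ?thesis using S' unfolding is_kernel_def by blast
      qed
    qed
    then show ?thesis by blast
  qed
qed

lemma tri:
  assumes E: "E = {a,b,c}" and ab: "line_adj a b" and ac: "line_adj a c" and bc: "line_adj b c"
    and fa: "f a \<ge> 3" and fb: "f b \<ge> 2" and fc: "f c \<ge> 1"
  shows "\<exists>D. f_kernel_perfect_orientation E line_adj f D"
proof -
  have sym: "line_adj x y \<Longrightarrow> line_adj y x" for x y :: "'a set" unfolding line_adj_def by blast
  have d: "a \<noteq> b" "a \<noteq> c" "b \<noteq> c" using ab ac bc unfolding line_adj_def by auto
  define D where "D = {(a,b),(a,c),(b,c)}"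
  define r where "r = (\<lambda>e. if e = a then 2 else if e = b then (1::nat) else 0)"
  have o: "orientation E line_adj D"
    unfolding orientation_def
  proof (intro conjI ballI impI)
    show "D \<subseteq> {(u, w). u \<in> E \<and> w \<in> E \<and> line_adj u w}" unfolding D_def E using ab ac bc by blast
  next
    fix u w assume "u \<in> E" "w \<in> E" "line_adj u w"
    moreover have "u \<noteq> w" using \<open>line_adj u w\<close> unfolding line_adj_def by blast
    moreover have "u = a \<or> u = b \<or> u = c" "w = a \<or> w = b \<or> w = c" using \<open>u \<in> E\<close> \<open>w \<in> E\<close> E by auto
    ultimately show "(u, w) \<in> D \<or> (w, u) \<in> D" unfolding D_def by auto
  qed
  have kp: "kernel_perfect E D"
    unfolding kernel_perfect_def
  proof (intro allI impI)
    fix W assume "W \<subseteq> E"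
    then have "finite W" unfolding E using finite_subset by blast
    moreover have "\<forall>x y. (x,y) \<in> D \<longrightarrow> r y < r x" unfolding D_def r_def using d by auto
    ultimately show "\<exists>S. is_kernel D W S" by (rule kernel_rank)
  qed
  have oa: "{w. (a, w) \<in> D} = {b,c}" unfolding D_def using d by auto
  have ob: "{w. (b, w) \<in> D} = {c}" unfolding D_def using d by auto
  have oc: "{w. (c, w) \<in> D} = {}" unfolding D_def using d by auto
  have "\<forall>v\<in>E. f v \<ge> 1 + outdeg D v"
    unfolding E outdeg_def using oa ob oc d fa fb fc by (auto simp: card_insert_if)
  then show ?thesis using o kp unfolding f_kernel_perfect_orientation_def by blast
qed


lemma la: "line_adj {0,1} {0,2::nat}" "line_adj {0,1} {1,2::nat}" "line_adj {0,2} {1,2::nat}"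
          "line_adj {0,2} {0,1::nat}" "line_adj {1,2} {0,1::nat}" "line_adj {1,2} {0,2::nat}"
  unfolding line_adj_def by (simp_all add: doubleton_eq_iff)

theorem mainTheorem16:
  fixes k p v :: nat
  assumes "k \<ge> 1"
    and "v \<in> joinV k"
    and "degree (joinE k) v = max_degree (joinV k) (joinE k)"
    and "p \<ge> max 3 (max_degree (joinV k) (joinE k))"
  shows "f_edge_orientable (joinE k) (f_pv (joinE k) p v)"
proof -
  have md: "max_degree (joinV k) (joinE k) \<ge> k+1" by (rule maxdeg)
  have fge: "f_pv (joinE k) p v e \<ge> max_degree (joinV k) (joinE k)" for e
    unfolding f_pv_def using assms(3,4) by auto
  show ?thesis
  proof (cases "k \<ge> 2")
    case True
    have "f_kernel_perfect_orientation (joinE k) line_adj (f_pv (joinE k) p v) (Dk k)"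
      unfolding f_kernel_perfect_orientation_def
    proof (intro conjI ballI)
      show "orientation (joinE k) line_adj (Dk k)" using assms(1) by (rule orient_Dk)
      show "kernel_perfect (joinE k) (Dk k)" by (rule kp_Dk)
      fix e assume "e \<in> joinE k"
      then have "outdeg (Dk k) e \<le> k" using True by (intro outdeg_Dk)
      then show "f_pv (joinE k) p v e \<ge> 1 + outdeg (Dk k) e" using fge[of e] md by linarith
    qed
    then show ?thesis unfolding f_edge_orientable_def by blast
  next
    case False
    then have k1: "k = 1" using assms(1) by linarith
    have E: "joinE k = {{0,1},{0,2},{1,2}}" unfolding k1 E_eq by auto
    have v: "v = 0 \<or> v = 1 \<or> v = 2" using assms(2) k1 unfolding joinV_def by auto
    have f2: "f_pv (joinE k) p v e \<ge> 2" for e using fge[of e] md k1 by linarith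
    have f3: "v \<notin> e \<Longrightarrow> f_pv (joinE k) p v e \<ge> 3" for e using assms(4) unfolding f_pv_def by auto
    have f1: "f_pv (joinE k) p v e \<ge> 1" for e using f2[of e] by linarith
    from v show ?thesis
    proof (elim disjE)
      assume v0: "v = 0"
      have "joinE k = {{1,2},{0,1},{0,2}}" using E by auto
      from tri[OF this la(5) la(6) la(1) f3 f2 f1] v0 show ?thesis
        unfolding f_edge_orientable_def by simp
    next
      assume v1: "v = 1"
      have "joinE k = {{0,2},{0,1},{1,2}}" using E by auto
      from tri[OF this la(4) la(3) la(2) f3 f2 f1] v1 show ?thesis
        unfolding f_edge_orientable_def by simp
    next
      assume v2: "v = 2"
      have "joinE k = {{0,1},{0,2},{1,2}}" using E by auto
      from tri[OF this la(1) la(2) la(3) f3 f2 f1] v2 show ?thesis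
        unfolding f_edge_orientable_def by simp
    qed
  qed
qed

end
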